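(* (i) Let $\mathcal{F}$ be a nonempty set of bivariate distributions and let $\mathcal{F}_{X,Y}=\{(F(\cdot,\infty),F(\infty,\cdot)) : F\in\mathcal{F}\}$ be the set of pairs of margins occurring in $\mathcal{F}$. For $F_{X,Y}=(F_X,F_Y)\in\mathcal{F}_{X,Y}$ let $\mathcal{F}^{F_{X,Y}}$ be the set of members of $\mathcal{F}$ with margins $F_X,F_Y$, and let $\underline{\mathcal{F}}^{F_{X,Y}}$ and $\overline{\mathcal{F}}^{F_{X,Y}}$ be its pointwise infimum and supremum. Then there exists a family $\{(P_{F_{X,Y}},Q_{F_{X,Y}}) : F_{X,Y}\in\mathcal{F}_{X,Y}\}$ of coherent imprecise copulas such that $\underline{\mathcal{F}}^{F_{X,Y}}(x,y)=P_{F_{X,Y}}(F_X(x),F_Y(y))$ and $\overline{\mathcal{F}}^{F_{X,Y}}(x,y)=Q_{F_{X,Y}}(F_X(x),F_Y(y))$ for every $F_{X,Y}\in\mathcal{F}_{X,Y}$ and all $x,y\in\overline{\mathbb{R}}$. (ii) Let $\mathcal{F}_X,\mathcal{F}_Y$ be nonempty sets of univariate distributions, let $\mathcal{F}_{X,Y}\subseteq\mathcal{F}_X\times\mathcal{F}_Y$ be nonempty, and let $\{(P_{F_{X,Y}},Q_{F_{X,Y}})\}_{F_{X,Y}\in\mathcal{F}_{X,Y}}$ be a family of coherent imprecise copulas. Then $\mathcal{F}=\{C(F_X,F_Y) : (F_X,F_Y)\in\mathcal{F}_{X,Y},\ C\in\mathcal{C}(P_{F_{X,Y}},Q_{F_{X,Y}})\}$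 is a nonempty set of bivariate distributions.
   Context: $\overline{\mathbb{R}}=\mathbb{R}\cup\{-\infty,\infty\}$. A univariate distribution is a nondecreasing $G:\overline{\mathbb{R}}\to[0,1]$ with $G(-\infty)=0$, $G(\infty)=1$ (not necessarily right continuous). A bivariate distribution is $F:\overline{\mathbb{R}}^2\to[0,1]$ with $F(x,-\infty)=F(-\infty,y)=0$, $F(\infty,\infty)=1$ and $F(x_1,y_1)+F(x_2,y_2)-F(x_2,y_1)-F(x_1,y_2)\geqslant 0$ for all $x_1\leqslant x_2$, $y_1\leqslant y_2$; its margins are $F(\cdot,\infty)$ and $F(\infty,\cdot)$. A quasi-copula is $Q:[0,1]^2\to[0,1]$ with $Q(u,0)=Q(0,v)=0$, $Q(u,1)=u$, $Q(1,v)=v$, nondecreasing in each variable, and $|Q(u_1,v_1)-Q(u_2,v_2)|\leqslant|u_1-u_2|+|v_1-v_2|$; a copula is a quasi-copula with nonnegative volume of every rectangle in $[0,1]^2$. For quasi-copulas $P\leqslant Q$, $\mathcal{C}(P,Q)$ is the set of copulas $C$ with $P\leqslant C\leqslant Q$. A coherent imprecise copula is a pair of quasi-copulas $P\leqslant Q$ with $P=\inf\mathcal{C}(P,Q)$ and $Q=\sup\mathcal{C}(P,Q)$ (pointwise). $C(F_X,F_Y)$ denotes $(x,y)\mapsto C(F_X(x),F_Y(y))$. *)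

theory Defs
  imports "HOL-Library.Extended_Real"
begin

definition univariate_distribution :: "(ereal \<Rightarrow> real) \<Rightarrow> bool" where
  "univariate_distribution G \<longleftrightarrow>
     mono G \<and> G (-\<infinity>) = 0 \<and> G \<infinity> = 1 \<and> (\<forall>x. 0 \<le> G x \<and> G x \<le> 1)"

definition bivariate_distribution :: "(ereal \<Rightarrow> ereal \<Rightarrow> real) \<Rightarrow> bool" where
  "bivariate_distribution F \<longleftrightarrow>
     (\<forall>x y. 0 \<le> F x y \<and> F x y \<le> 1) \<and>
     (\<forall>x. F x (-\<infinity>) = 0) \<and> (\<forall>y. F (-\<infinity>) y = 0) \<and> F \<infinity> \<infinity> = 1 \<and>
     (\<forall>x1 x2 y1 y2. x1 \<le> x2 \<longrightarrow> y1 \<le> y2 \<longrightarrow>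
        F x1 y1 + F x2 y2 - F x2 y1 - F x1 y2 \<ge> 0)"

definition margins :: "(ereal \<Rightarrow> ereal \<Rightarrow> real) \<Rightarrow> (ereal \<Rightarrow> real) \<times> (ereal \<Rightarrow> real)" where
  "margins F = ((\<lambda>x. F x \<infinity>), (\<lambda>y. F \<infinity> y))"

definition quasi_copula :: "(real \<Rightarrow> real \<Rightarrow> real) \<Rightarrow> bool" where
  "quasi_copula Q \<longleftrightarrow>
     (\<forall>u\<in>{0..1}. \<forall>v\<in>{0..1}. 0 \<le> Q u v \<and> Q u v \<le> 1) \<and>
     (\<forall>u\<in>{0..1}. Q u 0 = 0 \<and> Q u 1 = u) \<and>
     (\<forall>v\<in>{0..1}. Q 0 v = 0 \<and> Q 1 v = v) \<and>
     (\<forall>u1\<in>{0..1}. \<forall>u2\<in>{0..1}. \<forall>v\<in>{0..1}. u1 \<le> u2 \<longrightarrow> Q u1 v \<le> Q u2 v) \<and>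
     (\<forall>u\<in>{0..1}. \<forall>v1\<in>{0..1}. \<forall>v2\<in>{0..1}. v1 \<le> v2 \<longrightarrow> Q u v1 \<le> Q u v2) \<and>
     (\<forall>u1\<in>{0..1}. \<forall>u2\<in>{0..1}. \<forall>v1\<in>{0..1}. \<forall>v2\<in>{0..1}.
        \<bar>Q u1 v1 - Q u2 v2\<bar> \<le> \<bar>u1 - u2\<bar> + \<bar>v1 - v2\<bar>)"

definition copula :: "(real \<Rightarrow> real \<Rightarrow> real) \<Rightarrow> bool" where
  "copula C \<longleftrightarrow> quasi_copula C \<and>
     (\<forall>u1\<in>{0..1}. \<forall>u2\<in>{0..1}. \<forall>v1\<in>{0..1}. \<forall>v2\<in>{0..1}.
        u1 \<le> u2 \<longrightarrow> v1 \<le> v2 \<longrightarrow> C u1 v1 + C u2 v2 - C u2 v1 - C u1 v2 \<ge> 0)"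

definition copulas_between ::
  "(real \<Rightarrow> real \<Rightarrow> real) \<Rightarrow> (real \<Rightarrow> real \<Rightarrow> real) \<Rightarrow> (real \<Rightarrow> real \<Rightarrow> real) set" where
  "copulas_between P Q = {C. copula C \<and>
     (\<forall>u\<in>{0..1}. \<forall>v\<in>{0..1}. P u v \<le> C u v \<and> C u v \<le> Q u v)}"

text \<open>Coherent imprecise copula; the infimum/supremum being attained as P and Q requires
  the set of copulas in between to be nonempty (an empty infimum is not P).\<close>
definition coherent_imprecise_copula ::
  "(real \<Rightarrow> real \<Rightarrow> real) \<Rightarrow> (real \<Rightarrow> real \<Rightarrow> real) \<Rightarrow> bool" where
  "coherent_imprecise_copula P Q \<longleftrightarrow>
     quasi_copula P \<and> quasi_copula Q \<and>
     (\<forall>u\<in>{0..1}. \<forall>v\<in>{0..1}. P u v \<le> Q u v) \<and>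
     copulas_between P Q \<noteq> {} \<and>
     (\<forall>u\<in>{0..1}. \<forall>v\<in>{0..1}.
        P u v = (INF C\<in>copulas_between P Q. C u v) \<and>
        Q u v = (SUP C\<in>copulas_between P Q. C u v))"

end

theory Submission imports Defs "HOL-Analysis.Analysis" begin

definition sub2inc :: "real set \<Rightarrow> real set \<Rightarrow> (real \<Rightarrow> real \<Rightarrow> real) \<Rightarrow> bool" where
  "sub2inc A B S \<longleftrightarrow> (\<forall>u1\<in>A. \<forall>u2\<in>A. \<forall>v1\<in>B. \<forall>v2\<in>B. u1 \<le> u2 \<longrightarrow> v1 \<le> v2 \<longrightarrow>
     S u1 v1 + S u2 v2 - S u2 v1 - S u1 v2 \<ge> 0)"

definition subcop :: "real set \<Rightarrow> real set \<Rightarrow> (real \<Rightarrow> real \<Rightarrow> real) \<Rightarrow> bool" where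
  "subcop A B S \<longleftrightarrow> A \<subseteq> {0..1} \<and> B \<subseteq> {0..1} \<and> 0 \<in> A \<and> 1 \<in> A \<and> 0 \<in> B \<and> 1 \<in> B \<and>
     (\<forall>u\<in>A. S u 0 = 0 \<and> S u 1 = u) \<and> (\<forall>v\<in>B. S 0 v = 0 \<and> S 1 v = v) \<and> sub2inc A B S"

lemma subcop_transpose: "subcop A B S \<Longrightarrow> subcop B A (\<lambda>v u. S u v)"
  unfolding subcop_def sub2inc_def by (smt (verit))

lemma subcop_mono1:
  assumes "subcop A B S" "u1 \<in> A" "u2 \<in> A" "v \<in> B" "u1 \<le> u2"
  shows "S u1 v \<le> S u2 v" "S u2 v - S u1 v \<le> u2 - u1"
proof -
  have s: "sub2inc A B S" "0 \<in> B" "1 \<in> B" "S u1 0 = 0" "S u2 0 = 0" "S u1 1 = u1" "S u2 1 = u2" "B \<subseteq> {0..1}"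
    using assms unfolding subcop_def by auto
  have "v \<ge> 0" "v \<le> 1" using s(8) assms(4) by auto
  then show "S u1 v \<le> S u2 v" "S u2 v - S u1 v \<le> u2 - u1"
    using s(1) assms s unfolding sub2inc_def
    by (smt (verit))+
qed

lemma subcop_lip:
  assumes "subcop A B S" "u1 \<in> A" "u2 \<in> A" "v \<in> B"
  shows "\<bar>S u1 v - S u2 v\<bar> \<le> \<bar>u1 - u2\<bar>"
  using subcop_mono1[OF assms(1,2,3,4)] subcop_mono1[OF assms(1,3,2,4)]
  by (cases "u1 \<le> u2") auto

lemma subcop_full_copula:
  assumes "subcop {0..1} {0..1} S"
  shows "copula S"
proof -
  have T: "subcop {0..1} {0..1} (\<lambda>v u. S u v)" using subcop_transpose[OF assms] .
  have m1: "S u1 v \<le> S u2 v" "S u2 v - S u1 v \<le> u2 - u1"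
    if "u1 \<in> {0..1}" "u2 \<in> {0..1}" "v \<in> {0..1}" "u1 \<le> u2" for u1 u2 v
    using subcop_mono1[OF assms that] by auto
  have m2: "S u v1 \<le> S u v2" "S u v2 - S u v1 \<le> v2 - v1"
    if "v1 \<in> {0..1}" "v2 \<in> {0..1}" "u \<in> {0..1}" "v1 \<le> v2" for v1 v2 u
    using subcop_mono1[OF T that] by auto
  have l1: "\<bar>S u1 v - S u2 v\<bar> \<le> \<bar>u1 - u2\<bar>" if "u1 \<in> {0..1}" "u2 \<in> {0..1}" "v \<in> {0..1}" for u1 u2 v
    using subcop_lip[OF assms that] .
  have l2: "\<bar>S u v1 - S u v2\<bar> \<le> \<bar>v1 - v2\<bar>" if "v1 \<in> {0..1}" "v2 \<in> {0..1}" "u \<in> {0..1}" for v1 v2 u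
    using subcop_lip[OF T that] .
  have b: "\<forall>u\<in>{0..1}. S u 0 = 0 \<and> S u 1 = u" "\<forall>v\<in>{0..1}. S 0 v = 0 \<and> S 1 v = v"
    "sub2inc {0..1} {0..1} S"
    using assms unfolding subcop_def by auto
  have bnd: "0 \<le> S u v \<and> S u v \<le> 1" if "u \<in> {0..1}" "v \<in> {0..1}" for u v
  proof -
    have "S 0 v \<le> S u v" "S u v \<le> S 1 v" using m1[of 0 u v] m1[of u 1 v] that by auto
    then show ?thesis using b that by auto
  qed
  have lip: "\<bar>S u1 v1 - S u2 v2\<bar> \<le> \<bar>u1 - u2\<bar> + \<bar>v1 - v2\<bar>"
    if "u1 \<in> {0..1}" "u2 \<in> {0..1}" "v1 \<in> {0..1}" "v2 \<in> {0..1}" for u1 u2 v1 v2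
    using l1[of u1 u2 v1] l2[of v1 v2 u2] that by linarith
  show ?thesis unfolding copula_def quasi_copula_def
    using bnd lip b m1(1) m2(1) unfolding sub2inc_def by auto
qed

definition lo :: "real set \<Rightarrow> real \<Rightarrow> real" where "lo A u = Sup (A \<inter> {..u})"
definition hi :: "real set \<Rightarrow> real \<Rightarrow> real" where "hi A u = Inf (A \<inter> {u..})"
definition interp :: "real set \<Rightarrow> (real \<Rightarrow> real) \<Rightarrow> real \<Rightarrow> real" where
  "interp A f u = (if hi A u = lo A u then f (lo A u)
     else ((hi A u - u) * f (lo A u) + (u - lo A u) * f (hi A u)) / (hi A u - lo A u))"

locale cl01 =
  fixes A :: "real set"
  assumes cl: "closed A" and sub: "A \<subseteq> {0..1}" and z: "0 \<in> A" and o: "1 \<in> A"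
begin

lemma lo_props:
  assumes "u \<in> {0..1}"
  shows "lo A u \<in> A" "lo A u \<le> u" "\<And>a. a \<in> A \<Longrightarrow> a \<le> u \<Longrightarrow> a \<le> lo A u"
proof -
  have ne: "A \<inter> {..u} \<noteq> {}" using z assms by auto
  have bd: "bdd_above (A \<inter> {..u})" by (rule bdd_aboveI[of _ u]) auto
  have "Sup (A \<inter> {..u}) \<in> A \<inter> {..u}"
    by (rule closed_contains_Sup[OF ne bd]) (simp add: cl closed_Int)
  then show "lo A u \<in> A" "lo A u \<le> u" unfolding lo_def by auto
  show "\<And>a. a \<in> A \<Longrightarrow> a \<le> u \<Longrightarrow> a \<le> lo A u" unfolding lo_def
    using bd by (intro cSup_upper) auto
qed

lemma hi_props:
  assumes "u \<in> {0..1}"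
  shows "hi A u \<in> A" "u \<le> hi A u" "\<And>a. a \<in> A \<Longrightarrow> u \<le> a \<Longrightarrow> hi A u \<le> a"
proof -
  have ne: "A \<inter> {u..} \<noteq> {}" using o assms by auto
  have bd: "bdd_below (A \<inter> {u..})" by (rule bdd_belowI[of _ u]) auto
  have "Inf (A \<inter> {u..}) \<in> A \<inter> {u..}"
    by (rule closed_contains_Inf[OF ne bd]) (simp add: cl closed_Int)
  then show "hi A u \<in> A" "u \<le> hi A u" unfolding hi_def by auto
  show "\<And>a. a \<in> A \<Longrightarrow> u \<le> a \<Longrightarrow> hi A u \<le> a" unfolding hi_def
    using bd by (intro cInf_lower) auto
qed

lemma interp_on_A: assumes "a \<in> A" shows "interp A f a = f a"
proof -
  have "a \<in> {0..1}" using assms sub by auto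
  then have "lo A a = a" "hi A a = a" using lo_props[of a] hi_props[of a] assms by force+
  then show ?thesis unfolding interp_def by simp
qed

lemma interp_cong: assumes "u \<in> {0..1}" "\<And>a. a \<in> A \<Longrightarrow> f a = g a"
  shows "interp A f u = interp A g u"
  using lo_props(1)[OF assms(1)] hi_props(1)[OF assms(1)] assms(2) unfolding interp_def by simp

lemma aux_div: "((p::real)*(a-b) + q*(c-e))/d = (p*a+q*c)/d - (p*b+q*e)/d"
  by (simp add: diff_divide_distrib[symmetric] algebra_simps)

lemma interp_diff: "interp A (\<lambda>w. f w - g w) u = interp A f u - interp A g u"
  unfolding interp_def using aux_div by simp

lemma interp_id: assumes "u \<in> {0..1}" shows "interp A (\<lambda>w. w) u = u"
proof (cases "hi A u = lo A u")
  case True then show ?thesis using lo_props(2)[OF assms] hi_props(2)[OF assms] unfolding interp_def by simp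
next
  case False then show ?thesis unfolding interp_def by (simp add: field_simps)
qed

lemma interp_zero: "interp A (\<lambda>w. 0) u = 0"
  unfolding interp_def by simp

lemma interp_between:
  assumes "u \<in> {0..1}" "f (lo A u) \<le> f (hi A u)"
  shows "f (lo A u) \<le> interp A f u \<and> interp A f u \<le> f (hi A u)"
proof (cases "hi A u = lo A u")
  case True then show ?thesis using assms unfolding interp_def by simp
next
  case False
  let ?l = "lo A u" and ?h = "hi A u"
  have lh: "?l \<le> u" "u \<le> ?h" using lo_props(2)[OF assms(1)] hi_props(2)[OF assms(1)] by auto
  then have d: "?h - ?l > 0" using False by linarith
  have e: "interp A f u = f ?l + (u - ?l) / (?h - ?l) * (f ?h - f ?l)"
    using False d unfolding interp_def by (simp add: field_simps)
  have t: "0 \<le> (u - ?l) / (?h - ?l)" "(u - ?l) / (?h - ?l) \<le> 1" using lh d by auto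
  have "0 \<le> (u - ?l) / (?h - ?l) * (f ?h - f ?l)" using t assms(2) by (intro mult_nonneg_nonneg) auto
  moreover have "(u - ?l) / (?h - ?l) * (f ?h - f ?l) \<le> 1 * (f ?h - f ?l)"
    using t assms(2) by (intro mult_right_mono) auto
  ultimately show ?thesis using e by auto
qed

lemma interp_mono:
  assumes mf: "\<And>a b. a \<in> A \<Longrightarrow> b \<in> A \<Longrightarrow> a \<le> b \<Longrightarrow> f a \<le> f b"
    and u: "u1 \<in> {0..1}" "u2 \<in> {0..1}" "u1 \<le> u2"
  shows "interp A f u1 \<le> interp A f u2"
proof -
  note L1 = lo_props[OF u(1)] and L2 = lo_props[OF u(2)] and H1 = hi_props[OF u(1)] and H2 = hi_props[OF u(2)]
  have b1: "f (lo A u1) \<le> interp A f u1 \<and> interp A f u1 \<le> f (hi A u1)"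
    using interp_between[OF u(1)] mf L1 H1 by (meson order_trans)
  have b2: "f (lo A u2) \<le> interp A f u2 \<and> interp A f u2 \<le> f (hi A u2)"
    using interp_between[OF u(2)] mf L2 H2 by (meson order_trans)
  show ?thesis
  proof (cases "hi A u1 \<le> lo A u2")
    case True
    then have "f (hi A u1) \<le> f (lo A u2)" using mf L2 H1 by auto
    then show ?thesis using b1 b2 by linarith
  next
    case False
    have "\<not> u1 \<le> lo A u2" using H1(3)[OF L2(1)] False by auto
    then have "lo A u2 \<le> lo A u1" using L1(3)[OF L2(1)] by auto
    moreover have "lo A u1 \<le> lo A u2" using L2(3)[OF L1(1)] L1(2) u(3) by auto
    ultimately have el: "lo A u1 = lo A u2" by auto
    have "\<not> hi A u1 \<le> u2" using L2(3)[OF H1(1)] False by auto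
    then have "hi A u2 \<le> hi A u1" using H2(3)[OF H1(1)] by auto
    moreover have "hi A u1 \<le> hi A u2" using H1(3)[OF H2(1)] H2(2) u(3) by auto
    ultimately have eh: "hi A u1 = hi A u2" by auto
    let ?l = "lo A u1" and ?h = "hi A u1"
    have ne: "?h \<noteq> ?l" using \<open>\<not> u1 \<le> lo A u2\<close> el H1(2) by auto
    have d: "?h - ?l > 0" using ne L1(2) H1(2) by linarith
    have fm: "f ?l \<le> f ?h" using mf L1 H1 by (meson order_trans)
    have e1: "interp A f u1 = f ?l + (u1 - ?l) / (?h - ?l) * (f ?h - f ?l)"
      using ne d unfolding interp_def by (simp add: field_simps)
    have e2: "interp A f u2 = f ?l + (u2 - ?l) / (?h - ?l) * (f ?h - f ?l)"
      using ne d el eh unfolding interp_def by (simp add: field_simps)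
    have "(u1 - ?l) / (?h - ?l) \<le> (u2 - ?l) / (?h - ?l)" using d u(3) by (simp add: divide_right_mono)
    then have "(u1 - ?l) / (?h - ?l) * (f ?h - f ?l) \<le> (u2 - ?l) / (?h - ?l) * (f ?h - f ?l)"
      using fm by (intro mult_right_mono) auto
    then show ?thesis using e1 e2 by linarith
  qed
qed

end

lemma ext_interp:
  assumes "closed A" "subcop A B S"
  shows "\<exists>T. subcop {0..1} B T \<and> (\<forall>u\<in>A. \<forall>v\<in>B. T u v = S u v)"
proof -
  have s: "A \<subseteq> {0..1}" "B \<subseteq> {0..1}" "0 \<in> A" "1 \<in> A" "0 \<in> B" "1 \<in> B"
     "\<forall>u\<in>A. S u 0 = 0 \<and> S u 1 = u" "\<forall>v\<in>B. S 0 v = 0 \<and> S 1 v = v" "sub2inc A B S"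
    using assms(2) unfolding subcop_def by auto
  interpret cl01 A using assms s by unfold_locales auto
  define T where "T u v = interp A (\<lambda>w. S w v) u" for u v
  have agree: "\<forall>u\<in>A. \<forall>v\<in>B. T u v = S u v" unfolding T_def using interp_on_A by auto
  have t0: "T u 0 = 0" "T u 1 = u" if "u \<in> {0..1}" for u
  proof -
    show "T u 0 = 0" unfolding T_def using interp_cong[OF that, of "\<lambda>w. S w 0" "\<lambda>w. 0"] s(7) interp_zero by auto
    show "T u 1 = u" unfolding T_def using interp_cong[OF that, of "\<lambda>w. S w 1" "\<lambda>w. w"] s(7) interp_id[OF that] by auto
  qed
  have t1: "T 0 v = 0 \<and> T 1 v = v" if "v \<in> B" for v using agree s(3,4,8) that by auto
  have inc: "sub2inc {0..1} B T" unfolding sub2inc_def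
  proof (intro ballI impI)
    fix u1 u2 v1 v2 :: real assume u: "u1 \<in> {0..1}" "u2 \<in> {0..1}" and v: "v1 \<in> B" "v2 \<in> B" "u1 \<le> u2" "v1 \<le> v2"
    have mf: "(\<lambda>w. S w v2 - S w v1) a \<le> (\<lambda>w. S w v2 - S w v1) b" if "a \<in> A" "b \<in> A" "a \<le> b" for a b
      using s(9) that v unfolding sub2inc_def by (smt (verit))
    have "interp A (\<lambda>w. S w v2 - S w v1) u1 \<le> interp A (\<lambda>w. S w v2 - S w v1) u2"
      by (rule interp_mono[OF mf u v(3)])
    then show "T u1 v1 + T u2 v2 - T u2 v1 - T u1 v2 \<ge> 0" unfolding T_def interp_diff by linarith
  qed
  have "subcop {0..1} B T" unfolding subcop_def using s t0 t1 inc by auto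
  then show ?thesis using agree by blast
qed

lemma closure_seq_cont:
  fixes h :: "real \<Rightarrow> real"
  assumes "continuous_on (closure A) h" "x \<in> closure A"
  shows "\<exists>a. (\<forall>n. a n \<in> A) \<and> a \<longlonglongrightarrow> x \<and> (\<lambda>n. h (a n)) \<longlonglongrightarrow> h x"
proof -
  obtain a where a: "\<forall>n. a n \<in> A" "a \<longlonglongrightarrow> x" using assms(2) closure_sequential by blast
  have "\<forall>n. a n \<in> closure A" using a(1) closure_subset by blast
  then have "(h \<circ> a) \<longlonglongrightarrow> h x"
    using continuous_on_sequentially[THEN iffD1, OF assms(1), rule_format, OF assms(2)] a(2) by simp
  then show ?thesis using a by (auto simp: o_def)
qed

lemma closure_zero:
  fixes h :: "real \<Rightarrow> real"
  assumes "continuous_on (closure A) h" "\<And>a. a \<in> A \<Longrightarrow> h a = 0" "x \<in> closure A"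
  shows "h x = 0"
proof -
  obtain a where a: "\<forall>n. a n \<in> A" "(\<lambda>n. h (a n)) \<longlonglongrightarrow> h x" using closure_seq_cont[OF assms(1,3)] by blast
  have "(\<lambda>n. h (a n)) = (\<lambda>n. 0)" using a(1) assms(2) by auto
  then have "(\<lambda>n. 0::real) \<longlonglongrightarrow> h x" using a(2) by simp
  then show ?thesis using LIMSEQ_unique[OF _ tendsto_const] by metis
qed

lemma closure_mono:
  fixes h :: "real \<Rightarrow> real"
  assumes "continuous_on (closure A) h" "\<And>a b. a \<in> A \<Longrightarrow> b \<in> A \<Longrightarrow> a \<le> b \<Longrightarrow> h a \<le> h b"
    "x \<in> closure A" "y \<in> closure A" "x \<le> y"
  shows "h x \<le> h y"
proof (cases "x = y")
  case True then show ?thesis by simp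
next
  case False
  then have xy: "x < y" using assms(5) by auto
  obtain a where a: "\<forall>n. a n \<in> A" "a \<longlonglongrightarrow> x" "(\<lambda>n. h (a n)) \<longlonglongrightarrow> h x" using closure_seq_cont[OF assms(1,3)] by blast
  obtain b where b: "\<forall>n. b n \<in> A" "b \<longlonglongrightarrow> y" "(\<lambda>n. h (b n)) \<longlonglongrightarrow> h y" using closure_seq_cont[OF assms(1,4)] by blast
  have m: "x < (x+y)/2" "(x+y)/2 < y" using xy by auto
  have "eventually (\<lambda>n. a n < (x+y)/2) sequentially" using order_tendstoD(2)[OF a(2) m(1)] .
  moreover have "eventually (\<lambda>n. (x+y)/2 < b n) sequentially" using order_tendstoD(1)[OF b(2) m(2)] .
  ultimately have "eventually (\<lambda>n. h (a n) \<le> h (b n)) sequentially"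
    by eventually_elim (use a(1) b(1) assms(2) in auto)
  then show ?thesis by (intro tendsto_le[OF sequentially_bot b(3) a(3)])
qed

lemma ext_closure:
  assumes "subcop A B S"
  shows "\<exists>T. subcop (closure A) B T \<and> (\<forall>u\<in>A. \<forall>v\<in>B. T u v = S u v)"
proof -
  have s: "A \<subseteq> {0..1}" "B \<subseteq> {0..1}" "0 \<in> A" "1 \<in> A" "0 \<in> B" "1 \<in> B"
     "\<forall>u\<in>A. S u 0 = 0 \<and> S u 1 = u" "\<forall>v\<in>B. S 0 v = 0 \<and> S 1 v = v" "sub2inc A B S"
    using assms unfolding subcop_def by auto
  have "\<exists>g. continuous_on (closure A) g \<and> (\<forall>a\<in>A. g a = S a v)" if v: "v \<in> B" for v
  proof -
    have uc: "uniformly_continuous_on A (\<lambda>u. S u v)"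
      unfolding uniformly_continuous_on_def dist_real_def
    proof (intro allI impI)
      fix e :: real assume "e > 0"
      then show "\<exists>d>0. \<forall>x\<in>A. \<forall>x'\<in>A. \<bar>x' - x\<bar> < d \<longrightarrow> \<bar>S x' v - S x v\<bar> < e"
      proof (intro exI[of _ e] conjI ballI impI)
        fix x x' assume xx: "x \<in> A" "x' \<in> A" "\<bar>x' - x\<bar> < e"
        show "\<bar>S x' v - S x v\<bar> < e" using subcop_lip[OF assms xx(2,1) v] xx(3) by linarith
      qed (rule \<open>e > 0\<close>)
    qed
    obtain g where g: "uniformly_continuous_on (closure A) g" "\<And>x. x \<in> A \<Longrightarrow> S x v = g x"
      by (rule uniformly_continuous_on_extension_on_closure[OF uc]) (rule that; assumption)
    have "continuous_on (closure A) g" using g(1) by (rule uniformly_continuous_imp_continuous)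
    then show ?thesis using g(2) by (intro exI[of _ g]) simp
  qed
  then have ex: "\<forall>v\<in>B. \<exists>g. continuous_on (closure A) g \<and> (\<forall>a\<in>A. g a = S a v)" by blast
  then obtain G where G0: "\<forall>v\<in>B. continuous_on (closure A) (G v) \<and> (\<forall>a\<in>A. G v a = S a v)"
    using bchoice[OF ex] by blast
  have Gc: "continuous_on (closure A) (G v)" and Ga: "\<And>a. a \<in> A \<Longrightarrow> G v a = S a v" if "v \<in> B" for v
    using G0 that by auto
  define T where "T u v = (if v \<in> B then G v u else 0)" for u v
  have agree: "\<forall>u\<in>A. \<forall>v\<in>B. T u v = S u v" using Ga unfolding T_def by simp
  have cA: "closure A \<subseteq> {0..1}" using s(1) by (simp add: closure_minimal)
  have t0: "T u 0 = 0" "T u 1 = u" if "u \<in> closure A" for u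
  proof -
    have "G 0 u = 0"
      by (rule closure_zero[of A "G 0", OF Gc[OF s(5)] _ that]) (simp add: Ga[OF s(5)] s(7))
    then show "T u 0 = 0" unfolding T_def using s(5) by simp
    have c: "continuous_on (closure A) (\<lambda>w. G 1 w - w)" using Gc[OF s(6)] by (intro continuous_intros) auto
    have "(\<lambda>w. G 1 w - w) u = 0"
      by (rule closure_zero[of A, OF c _ that]) (simp add: Ga[OF s(6)] s(7))
    then show "T u 1 = u" unfolding T_def using s(6) by simp
  qed
  have t1: "T 0 v = 0 \<and> T 1 v = v" if "v \<in> B" for v
    unfolding T_def using Ga[OF that, of 0] Ga[OF that, of 1] s(3,4) s(8) that by simp
  have inc: "sub2inc (closure A) B T" unfolding sub2inc_def
  proof (intro ballI impI)
    fix u1 u2 v1 v2 :: real assume u: "u1 \<in> closure A" "u2 \<in> closure A" and v: "v1 \<in> B" "v2 \<in> B" "u1 \<le> u2" "v1 \<le> v2"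
    have "(\<lambda>w. G v2 w - G v1 w) u1 \<le> (\<lambda>w. G v2 w - G v1 w) u2"
    proof (rule closure_mono[OF _ _ u v(3)])
      show "continuous_on (closure A) (\<lambda>w. G v2 w - G v1 w)" using Gc[OF v(1)] Gc[OF v(2)] by (intro continuous_intros)
      show "G v2 a - G v1 a \<le> G v2 b - G v1 b" if "a \<in> A" "b \<in> A" "a \<le> b" for a b
      proof -
        have "S a v1 + S b v2 - S b v1 - S a v2 \<ge> 0" using s(9) that v unfolding sub2inc_def by blast
        then show ?thesis using Ga[OF v(1)] Ga[OF v(2)] that by simp
      qed
    qed
    then show "T u1 v1 + T u2 v2 - T u2 v1 - T u1 v2 \<ge> 0" unfolding T_def using v by simp
  qed
  have "0 \<in> closure A" "1 \<in> closure A" using s(3,4) closure_subset by auto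
  then have "subcop (closure A) B T" unfolding subcop_def using s(2,5,6) t0 t1 inc cA by simp
  then show ?thesis using agree by blast
qed

lemma ext1:
  assumes "subcop A B S"
  shows "\<exists>T. subcop {0..1} B T \<and> (\<forall>u\<in>A. \<forall>v\<in>B. T u v = S u v)"
proof -
  obtain T1 where T1: "subcop (closure A) B T1" "\<forall>u\<in>A. \<forall>v\<in>B. T1 u v = S u v" using ext_closure[OF assms] by blast
  obtain T2 where T2: "subcop {0..1} B T2" "\<forall>u\<in>closure A. \<forall>v\<in>B. T2 u v = T1 u v"
    using ext_interp[OF closed_closure T1(1)] by blast
  have "\<forall>u\<in>A. \<forall>v\<in>B. T2 u v = S u v"
  proof (intro ballI)
    fix u v assume "u \<in> A" "v \<in> B"
    moreover have "u \<in> closure A" using \<open>u \<in> A\<close> closure_subset by blast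
    ultimately show "T2 u v = S u v" using T1(2) T2(2) by simp
  qed
  then show ?thesis using T2(1) by blast
qed

lemma sklar_ext:
  assumes "subcop A B S"
  shows "\<exists>C. copula C \<and> (\<forall>u\<in>A. \<forall>v\<in>B. C u v = S u v)"
proof -
  obtain T where T: "subcop {0..1} B T" "\<forall>u\<in>A. \<forall>v\<in>B. T u v = S u v" using ext1[OF assms] by blast
  obtain T' where T': "subcop {0..1} {0..1} T'" "\<forall>v\<in>B. \<forall>u\<in>{0..1}. T' v u = T u v"
    using ext1[OF subcop_transpose[OF T(1)]] by blast
  have "subcop {0..1} {0..1} (\<lambda>u v. T' v u)" using subcop_transpose[OF T'(1)] .
  then have "copula (\<lambda>u v. T' v u)" by (rule subcop_full_copula)
  moreover have "\<forall>u\<in>A. \<forall>v\<in>B. T' v u = S u v"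
  proof (intro ballI)
    fix u v assume uv: "u \<in> A" "v \<in> B"
    have "A \<subseteq> {0..1}" using assms unfolding subcop_def by blast
    then have "u \<in> {0..1}" using uv by blast
    then show "T' v u = S u v" using T(2) T'(2) uv by simp
  qed
  ultimately show ?thesis by blast
qed

lemma biv_x:
  assumes "bivariate_distribution F" "x1 \<le> x2"
  shows "0 \<le> F x2 y - F x1 y" "F x2 y - F x1 y \<le> F x2 \<infinity> - F x1 \<infinity>"
proof -
  have r: "\<And>x1 x2 y1 y2. x1 \<le> x2 \<Longrightarrow> y1 \<le> y2 \<Longrightarrow> F x1 y1 + F x2 y2 - F x2 y1 - F x1 y2 \<ge> 0"
    and z: "\<And>x. F x (-\<infinity>) = 0" using assms(1) unfolding bivariate_distribution_def by auto
  show "0 \<le> F x2 y - F x1 y" using r[OF assms(2), of "-\<infinity>" y] z by simp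
  show "F x2 y - F x1 y \<le> F x2 \<infinity> - F x1 \<infinity>" using r[OF assms(2), of y "\<infinity>"] by simp
qed

lemma biv_y:
  assumes "bivariate_distribution F" "y1 \<le> y2"
  shows "0 \<le> F x y2 - F x y1" "F x y2 - F x y1 \<le> F \<infinity> y2 - F \<infinity> y1"
proof -
  have r: "\<And>x1 x2 y1 y2. x1 \<le> x2 \<Longrightarrow> y1 \<le> y2 \<Longrightarrow> F x1 y1 + F x2 y2 - F x2 y1 - F x1 y2 \<ge> 0"
    and z: "\<And>y. F (-\<infinity>) y = 0" using assms(1) unfolding bivariate_distribution_def by auto
  show "0 \<le> F x y2 - F x y1" using r[OF _ assms(2), of "-\<infinity>" x] z by simp
  show "F x y2 - F x y1 \<le> F \<infinity> y2 - F \<infinity> y1" using r[OF _ assms(2), of x "\<infinity>"] by simp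
qed

lemma biv_eqx:
  assumes "bivariate_distribution F" "F x1 \<infinity> = F x2 \<infinity>"
  shows "F x1 y = F x2 y"
proof (cases "x1 \<le> x2")
  case True then show ?thesis using biv_x[OF assms(1) True, of y] assms(2) by linarith
next
  case False then have "x2 \<le> x1" by auto
  then show ?thesis using biv_x[OF assms(1) \<open>x2 \<le> x1\<close>, of y] assms(2) by linarith
qed

lemma biv_eqy:
  assumes "bivariate_distribution F" "F \<infinity> y1 = F \<infinity> y2"
  shows "F x y1 = F x y2"
proof (cases "y1 \<le> y2")
  case True then show ?thesis using biv_y[OF assms(1) True, of x] assms(2) by linarith
next
  case False then have "y2 \<le> y1" by auto
  then show ?thesis using biv_y[OF assms(1) \<open>y2 \<le> y1\<close>, of x] assms(2) by linarith
qed

lemma sklar: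
  assumes F: "bivariate_distribution F"
  shows "\<exists>C. copula C \<and> (\<forall>x y. F x y = C (F x \<infinity>) (F \<infinity> y))"
proof -
  define S where "S u v = F (SOME x. F x \<infinity> = u) (SOME y. F \<infinity> y = v)" for u v
  have Sval: "S (F x \<infinity>) (F \<infinity> y) = F x y" for x y
  proof -
    let ?x = "SOME x'. F x' \<infinity> = F x \<infinity>" and ?y = "SOME y'. F \<infinity> y' = F \<infinity> y"
    have "F ?x \<infinity> = F x \<infinity>" by (rule someI) (rule refl)
    moreover have "F \<infinity> ?y = F \<infinity> y" by (rule someI) (rule refl)
    ultimately have "F ?x ?y = F x ?y" "F x ?y = F x y" using biv_eqx[OF F] biv_eqy[OF F] by blast+
    then show ?thesis unfolding S_def by simp
  qed
  have b: "\<And>x y. 0 \<le> F x y \<and> F x y \<le> 1" "\<And>x. F x (-\<infinity>) = 0" "\<And>y. F (-\<infinity>) y = 0" "F \<infinity> \<infinity> = 1"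
    using F unfolding bivariate_distribution_def by auto
  let ?A = "range (\<lambda>x. F x \<infinity>)" and ?B = "range (\<lambda>y. F \<infinity> y)"
  have sc: "subcop ?A ?B S" unfolding subcop_def
  proof (intro conjI)
    show "?A \<subseteq> {0..1}" "?B \<subseteq> {0..1}" using b(1) by auto
    show "0 \<in> ?A" using b(3)[of \<infinity>] by (metis rangeI)
    show "1 \<in> ?A" using b(4) by (metis rangeI)
    show "0 \<in> ?B" using b(2)[of \<infinity>] by (metis rangeI)
    show "1 \<in> ?B" using b(4) by (metis rangeI)
    show "\<forall>u\<in>?A. S u 0 = 0 \<and> S u 1 = u"
    proof
      fix u assume "u \<in> ?A" then obtain x where x: "u = F x \<infinity>" by blast
      have "S u 0 = S (F x \<infinity>) (F \<infinity> (-\<infinity>))" using x b(2) by simp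
      also have "\<dots> = 0" using Sval[of x "-\<infinity>"] b(2) by simp
      finally show "S u 0 = 0 \<and> S u 1 = u" using Sval[of x \<infinity>] x b(4) by simp
    qed
    show "\<forall>v\<in>?B. S 0 v = 0 \<and> S 1 v = v"
    proof
      fix v assume "v \<in> ?B" then obtain y where y: "v = F \<infinity> y" by blast
      have "S 0 v = S (F (-\<infinity>) \<infinity>) (F \<infinity> y)" using y b(3) by simp
      also have "\<dots> = 0" using Sval[of "-\<infinity>" y] b(3) by simp
      finally show "S 0 v = 0 \<and> S 1 v = v" using Sval[of \<infinity> y] y b(4) by simp
    qed
    show "sub2inc ?A ?B S" unfolding sub2inc_def
    proof (intro ballI impI)
      fix u1 u2 v1 v2 assume "u1 \<in> ?A" "u2 \<in> ?A" "v1 \<in> ?B" "v2 \<in> ?B" and uv: "u1 \<le> u2" "v1 \<le> v2"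
      then obtain x1 x2 y1 y2 where e: "u1 = F x1 \<infinity>" "u2 = F x2 \<infinity>" "v1 = F \<infinity> y1" "v2 = F \<infinity> y2" by blast
      have r: "\<And>x1 x2 y1 y2. x1 \<le> x2 \<Longrightarrow> y1 \<le> y2 \<Longrightarrow> F x1 y1 + F x2 y2 - F x2 y1 - F x1 y2 \<ge> 0"
        using F unfolding bivariate_distribution_def by auto
      have "F x1 y1 + F x2 y2 - F x2 y1 - F x1 y2 \<ge> 0"
      proof (cases "x1 \<le> x2")
        case False
        then have "x2 \<le> x1" by auto
        then have "F x1 \<infinity> = F x2 \<infinity>" using biv_x(1)[OF F \<open>x2 \<le> x1\<close>, of \<infinity>] uv(1) e by linarith
        then have "F x1 y1 = F x2 y1" "F x1 y2 = F x2 y2" using biv_eqx[OF F] by blast+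
        then show ?thesis by simp
      next
        case x: True
        show ?thesis
        proof (cases "y1 \<le> y2")
          case False
          then have "y2 \<le> y1" by auto
          then have "F \<infinity> y1 = F \<infinity> y2" using biv_y(1)[OF F \<open>y2 \<le> y1\<close>, of \<infinity>] uv(2) e by linarith
          then have "F x1 y1 = F x1 y2" "F x2 y1 = F x2 y2" using biv_eqy[OF F] by blast+
          then show ?thesis by simp
        qed (rule r[OF x])
      qed
      then show "S u1 v1 + S u2 v2 - S u2 v1 - S u1 v2 \<ge> 0" using e Sval by simp
    qed
  qed
  obtain C where C: "copula C" "\<forall>u\<in>?A. \<forall>v\<in>?B. C u v = S u v" using sklar_ext[OF sc] by blast
  have "F x y = C (F x \<infinity>) (F \<infinity> y)" for x y using C(2) Sval by simp
  then show ?thesis using C(1) by blast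
qed

lemma inf_le_shift:
  fixes f g :: "'i \<Rightarrow> real"
  assumes "I \<noteq> {}" "bdd_below (f ` I)" "\<And>i. i \<in> I \<Longrightarrow> f i \<le> g i + L"
  shows "(INF i\<in>I. f i) \<le> (INF i\<in>I. g i) + L"
proof -
  have "(INF i\<in>I. f i) - L \<le> (INF i\<in>I. g i)"
  proof (rule cINF_greatest[OF assms(1)])
    fix i assume "i \<in> I"
    have "(INF i\<in>I. f i) \<le> f i" using assms(2) \<open>i \<in> I\<close> by (rule cINF_lower)
    then show "(INF i\<in>I. f i) - L \<le> g i" using assms(3)[OF \<open>i \<in> I\<close>] by linarith
  qed
  then show ?thesis by linarith
qed

lemma sup_le_shift:
  fixes f g :: "'i \<Rightarrow> real"
  assumes "I \<noteq> {}" "bdd_above (g ` I)" "\<And>i. i \<in> I \<Longrightarrow> f i \<le> g i + L"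
  shows "(SUP i\<in>I. f i) \<le> (SUP i\<in>I. g i) + L"
proof -
  have "(SUP i\<in>I. f i) \<le> (SUP i\<in>I. g i) + L"
  proof (rule cSUP_least[OF assms(1)])
    fix i assume "i \<in> I"
    have "g i \<le> (SUP i\<in>I. g i)" using \<open>i \<in> I\<close> assms(2) by (rule cSUP_upper)
    then show "f i \<le> (SUP i\<in>I. g i) + L" using assms(3)[OF \<open>i \<in> I\<close>] by linarith
  qed
  then show ?thesis .
qed

lemma copula_props:
  assumes "copula C"
  shows "\<And>u v. u \<in> {0..1} \<Longrightarrow> v \<in> {0..1} \<Longrightarrow> 0 \<le> C u v \<and> C u v \<le> 1"
    "\<And>u. u \<in> {0..1} \<Longrightarrow> C u 0 = 0 \<and> C u 1 = u"
    "\<And>v. v \<in> {0..1} \<Longrightarrow> C 0 v = 0 \<and> C 1 v = v"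
    "\<And>u1 u2 v. u1 \<in> {0..1} \<Longrightarrow> u2 \<in> {0..1} \<Longrightarrow> v \<in> {0..1} \<Longrightarrow> u1 \<le> u2 \<Longrightarrow> C u1 v \<le> C u2 v"
    "\<And>u v1 v2. u \<in> {0..1} \<Longrightarrow> v1 \<in> {0..1} \<Longrightarrow> v2 \<in> {0..1} \<Longrightarrow> v1 \<le> v2 \<Longrightarrow> C u v1 \<le> C u v2"
    "\<And>u1 u2 v1 v2. u1 \<in> {0..1} \<Longrightarrow> u2 \<in> {0..1} \<Longrightarrow> v1 \<in> {0..1} \<Longrightarrow> v2 \<in> {0..1} \<Longrightarrow>
        C u1 v1 \<le> C u2 v2 + (\<bar>u1 - u2\<bar> + \<bar>v1 - v2\<bar>)"
proof -
  have q: "quasi_copula C" using assms unfolding copula_def by blast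
  note d = q[unfolded quasi_copula_def]
  show "\<And>u v. u \<in> {0..1} \<Longrightarrow> v \<in> {0..1} \<Longrightarrow> 0 \<le> C u v \<and> C u v \<le> 1" using d by blast
  show "\<And>u. u \<in> {0..1} \<Longrightarrow> C u 0 = 0 \<and> C u 1 = u" using d by blast
  show "\<And>v. v \<in> {0..1} \<Longrightarrow> C 0 v = 0 \<and> C 1 v = v" using d by blast
  show "\<And>u1 u2 v. u1 \<in> {0..1} \<Longrightarrow> u2 \<in> {0..1} \<Longrightarrow> v \<in> {0..1} \<Longrightarrow> u1 \<le> u2 \<Longrightarrow> C u1 v \<le> C u2 v"
    using d by blast
  show "\<And>u v1 v2. u \<in> {0..1} \<Longrightarrow> v1 \<in> {0..1} \<Longrightarrow> v2 \<in> {0..1} \<Longrightarrow> v1 \<le> v2 \<Longrightarrow> C u v1 \<le> C u v2"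
    using d by blast
  fix u1 u2 v1 v2 :: real assume a: "u1 \<in> {0..1}" "u2 \<in> {0..1}" "v1 \<in> {0..1}" "v2 \<in> {0..1}"
  have "\<bar>C u1 v1 - C u2 v2\<bar> \<le> \<bar>u1 - u2\<bar> + \<bar>v1 - v2\<bar>" using d a by blast
  then show "C u1 v1 \<le> C u2 v2 + (\<bar>u1 - u2\<bar> + \<bar>v1 - v2\<bar>)" by linarith
qed

lemma coherent_family:
  fixes c :: "'i \<Rightarrow> real \<Rightarrow> real \<Rightarrow> real"
  assumes I: "I \<noteq> {}" and cop: "\<And>i. i \<in> I \<Longrightarrow> copula (c i)"
  defines "P \<equiv> \<lambda>u v. INF i\<in>I. c i u v" and "Q \<equiv> \<lambda>u v. SUP i\<in>I. c i u v"
  shows "coherent_imprecise_copula P Q"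
proof -
  note cp = copula_props[OF cop]
  have bb: "bdd_below ((\<lambda>i. c i u v) ` I)" "bdd_above ((\<lambda>i. c i u v) ` I)"
    if "u \<in> {0..1}" "v \<in> {0..1}" for u v
    using cp(1)[OF _ that] by (auto intro!: bdd_belowI[of _ 0] bdd_aboveI[of _ 1])
  obtain i0 where i0: "i0 \<in> I" using I by blast
  have PlQ: "P u v \<le> c i u v" "c i u v \<le> Q u v" if "u \<in> {0..1}" "v \<in> {0..1}" "i \<in> I" for u v i
    unfolding P_def Q_def using bb[OF that(1,2)] that(3) by (auto intro: cINF_lower cSUP_upper)
  have Pg: "z \<le> P u v" if "\<And>i. i \<in> I \<Longrightarrow> z \<le> c i u v" for z u v
    unfolding P_def using that I by (intro cINF_greatest) auto
  have Ql: "Q u v \<le> z" if "\<And>i. i \<in> I \<Longrightarrow> c i u v \<le> z" for z u v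
    unfolding Q_def using that I by (intro cSUP_least) auto
  have qP: "quasi_copula P" unfolding quasi_copula_def
  proof (intro conjI ballI impI)
    fix u v :: real assume uv: "u \<in> {0..1}" "v \<in> {0..1}"
    show "0 \<le> P u v" using cp(1)[OF _ uv] by (intro Pg) auto
    show "P u v \<le> 1" using PlQ(1)[OF uv i0] cp(1)[OF i0 uv] by linarith
  next
    fix u :: real assume u: "u \<in> {0..1}"
    show "P u 0 = 0" unfolding P_def using cp(2)[OF _ u] I by simp
    show "P u 1 = u" unfolding P_def using cp(2)[OF _ u] I by simp
  next
    fix v :: real assume v: "v \<in> {0..1}"
    show "P 0 v = 0" unfolding P_def using cp(3)[OF _ v] I by simp
    show "P 1 v = v" unfolding P_def using cp(3)[OF _ v] I by simp
  next
    fix u1 u2 v :: real assume a: "u1 \<in> {0..1}" "u2 \<in> {0..1}" "v \<in> {0..1}" "u1 \<le> u2"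
    show "P u1 v \<le> P u2 v" unfolding P_def
      using inf_le_shift[OF I bb(1)[OF a(1,3)], of "\<lambda>i. c i u2 v" 0] cp(4)[OF _ a] by simp
  next
    fix u v1 v2 :: real assume a: "u \<in> {0..1}" "v1 \<in> {0..1}" "v2 \<in> {0..1}" "v1 \<le> v2"
    show "P u v1 \<le> P u v2" unfolding P_def
      using inf_le_shift[OF I bb(1)[OF a(1,2)], of "\<lambda>i. c i u v2" 0] cp(5)[OF _ a] by simp
  next
    fix u1 u2 v1 v2 :: real assume a: "u1 \<in> {0..1}" "u2 \<in> {0..1}" "v1 \<in> {0..1}" "v2 \<in> {0..1}"
    have "P u1 v1 \<le> P u2 v2 + (\<bar>u1 - u2\<bar> + \<bar>v1 - v2\<bar>)" unfolding P_def
      by (rule inf_le_shift[OF I bb(1)[OF a(1,3)]]) (rule cp(6)[OF _ a])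
    moreover have "P u2 v2 \<le> P u1 v1 + (\<bar>u2 - u1\<bar> + \<bar>v2 - v1\<bar>)" unfolding P_def
      by (rule inf_le_shift[OF I bb(1)[OF a(2,4)]]) (rule cp(6)[OF _ a(2,1,4,3)])
    ultimately show "\<bar>P u1 v1 - P u2 v2\<bar> \<le> \<bar>u1 - u2\<bar> + \<bar>v1 - v2\<bar>" by linarith
  qed
  have qQ: "quasi_copula Q" unfolding quasi_copula_def
  proof (intro conjI ballI impI)
    fix u v :: real assume uv: "u \<in> {0..1}" "v \<in> {0..1}"
    show "Q u v \<le> 1" using cp(1)[OF _ uv] by (intro Ql) auto
    show "0 \<le> Q u v" using PlQ(2)[OF uv i0] cp(1)[OF i0 uv] by linarith
  next
    fix u :: real assume u: "u \<in> {0..1}"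
    show "Q u 0 = 0" unfolding Q_def using cp(2)[OF _ u] I by simp
    show "Q u 1 = u" unfolding Q_def using cp(2)[OF _ u] I by simp
  next
    fix v :: real assume v: "v \<in> {0..1}"
    show "Q 0 v = 0" unfolding Q_def using cp(3)[OF _ v] I by simp
    show "Q 1 v = v" unfolding Q_def using cp(3)[OF _ v] I by simp
  next
    fix u1 u2 v :: real assume a: "u1 \<in> {0..1}" "u2 \<in> {0..1}" "v \<in> {0..1}" "u1 \<le> u2"
    show "Q u1 v \<le> Q u2 v" unfolding Q_def
      using sup_le_shift[OF I bb(2)[OF a(2,3)], of "\<lambda>i. c i u1 v" 0] cp(4)[OF _ a] by simp
  next
    fix u v1 v2 :: real assume a: "u \<in> {0..1}" "v1 \<in> {0..1}" "v2 \<in> {0..1}" "v1 \<le> v2"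
    show "Q u v1 \<le> Q u v2" unfolding Q_def
      using sup_le_shift[OF I bb(2)[OF a(1,3)], of "\<lambda>i. c i u v1" 0] cp(5)[OF _ a] by simp
  next
    fix u1 u2 v1 v2 :: real assume a: "u1 \<in> {0..1}" "u2 \<in> {0..1}" "v1 \<in> {0..1}" "v2 \<in> {0..1}"
    have "Q u1 v1 \<le> Q u2 v2 + (\<bar>u1 - u2\<bar> + \<bar>v1 - v2\<bar>)" unfolding Q_def
      by (rule sup_le_shift[OF I bb(2)[OF a(2,4)]]) (rule cp(6)[OF _ a])
    moreover have "Q u2 v2 \<le> Q u1 v1 + (\<bar>u2 - u1\<bar> + \<bar>v2 - v1\<bar>)" unfolding Q_def
      by (rule sup_le_shift[OF I bb(2)[OF a(1,3)]]) (rule cp(6)[OF _ a(2,1,4,3)])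
    ultimately show "\<bar>Q u1 v1 - Q u2 v2\<bar> \<le> \<bar>u1 - u2\<bar> + \<bar>v1 - v2\<bar>" by linarith
  qed
  have inb: "c i \<in> copulas_between P Q" if "i \<in> I" for i
    unfolding copulas_between_def using cop[OF that] PlQ that by auto
  have ne: "copulas_between P Q \<noteq> {}" using inb[OF i0] by blast
  have eqs: "P u v = (INF C\<in>copulas_between P Q. C u v) \<and> Q u v = (SUP C\<in>copulas_between P Q. C u v)"
    if uv: "u \<in> {0..1}" "v \<in> {0..1}" for u v
  proof -
    have bnd: "P u v \<le> C u v \<and> C u v \<le> Q u v" if "C \<in> copulas_between P Q" for C
      using that uv unfolding copulas_between_def by auto
    have bl: "bdd_below ((\<lambda>C. C u v) ` copulas_between P Q)" using bnd by (auto intro!: bdd_belowI[of _ "P u v"])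
    have ba: "bdd_above ((\<lambda>C. C u v) ` copulas_between P Q)" using bnd by (auto intro!: bdd_aboveI[of _ "Q u v"])
    have "P u v \<le> (INF C\<in>copulas_between P Q. C u v)" using ne bnd by (intro cINF_greatest) auto
    moreover have "(INF C\<in>copulas_between P Q. C u v) \<le> P u v"
    proof (rule Pg)
      fix i assume "i \<in> I"
      show "(INF C\<in>copulas_between P Q. C u v) \<le> c i u v" using bl inb[OF \<open>i \<in> I\<close>] by (rule cINF_lower)
    qed
    moreover have "(SUP C\<in>copulas_between P Q. C u v) \<le> Q u v" using ne bnd by (intro cSUP_least) auto
    moreover have "Q u v \<le> (SUP C\<in>copulas_between P Q. C u v)"
    proof (rule Ql)
      fix i assume "i \<in> I"
      show "c i u v \<le> (SUP C\<in>copulas_between P Q. C u v)" using inb[OF \<open>i \<in> I\<close>] ba by (rule cSUP_upper)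
    qed
    ultimately show ?thesis by linarith
  qed
  have "\<forall>u\<in>{0..1}. \<forall>v\<in>{0..1}. P u v \<le> Q u v" using PlQ i0 by (meson order_trans)
  then show ?thesis unfolding coherent_imprecise_copula_def using qP qQ ne eqs by blast
qed

lemma part1: "(\<forall>\<F> :: (ereal \<Rightarrow> ereal \<Rightarrow> real) set.
      \<F> \<noteq> {} \<and> (\<forall>F\<in>\<F>. bivariate_distribution F) \<longrightarrow>
      (\<exists>P Q :: (ereal \<Rightarrow> real) \<times> (ereal \<Rightarrow> real) \<Rightarrow> real \<Rightarrow> real \<Rightarrow> real.
         \<forall>m\<in>margins ` \<F>.
           coherent_imprecise_copula (P m) (Q m) \<and>
           (\<forall>x y. (INF F\<in>{F\<in>\<F>. margins F = m}. F x y) = P m (fst m x) (snd m y) \<and>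
                  (SUP F\<in>{F\<in>\<F>. margins F = m}. F x y) = Q m (fst m x) (snd m y))))"
proof (intro allI impI)
  fix \<F> :: "(ereal \<Rightarrow> ereal \<Rightarrow> real) set"
  assume a: "\<F> \<noteq> {} \<and> (\<forall>F\<in>\<F>. bivariate_distribution F)"
  define Cop where "Cop F = (SOME C. copula C \<and> (\<forall>x y. F x y = C (F x \<infinity>) (F \<infinity> y)))" for F :: "ereal \<Rightarrow> ereal \<Rightarrow> real"
  have Cop: "copula (Cop F) \<and> (\<forall>x y. F x y = Cop F (F x \<infinity>) (F \<infinity> y))" if "F \<in> \<F>" for F
    unfolding Cop_def by (rule someI_ex[OF sklar]) (use a that in blast)
  define P where "P m = (\<lambda>u v. INF F\<in>{F\<in>\<F>. margins F = m}. Cop F u v)" for m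
  define Q where "Q m = (\<lambda>u v. SUP F\<in>{F\<in>\<F>. margins F = m}. Cop F u v)" for m
  show "\<exists>P Q :: (ereal \<Rightarrow> real) \<times> (ereal \<Rightarrow> real) \<Rightarrow> real \<Rightarrow> real \<Rightarrow> real.
         \<forall>m\<in>margins ` \<F>.
           coherent_imprecise_copula (P m) (Q m) \<and>
           (\<forall>x y. (INF F\<in>{F\<in>\<F>. margins F = m}. F x y) = P m (fst m x) (snd m y) \<and>
                  (SUP F\<in>{F\<in>\<F>. margins F = m}. F x y) = Q m (fst m x) (snd m y))"
  proof (rule exI[of _ P], rule exI[of _ Q], intro ballI conjI allI)
    fix m assume "m \<in> margins ` \<F>"
    then obtain F0 where F0: "F0 \<in> \<F>" "margins F0 = m" by blast
    let ?G = "{F\<in>\<F>. margins F = m}"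
    have ne: "?G \<noteq> {}" using F0 by blast
    have "coherent_imprecise_copula (\<lambda>u v. INF F\<in>?G. Cop F u v) (\<lambda>u v. SUP F\<in>?G. Cop F u v)"
      by (rule coherent_family[OF ne]) (use Cop in blast)
    then show "coherent_imprecise_copula (P m) (Q m)" unfolding P_def Q_def .
    fix x y
    have e: "F x y = Cop F (fst m x) (snd m y)" if "F \<in> ?G" for F
    proof -
      have "fst m x = F x \<infinity>" "snd m y = F \<infinity> y" using that unfolding margins_def by auto
      then show ?thesis using Cop that by simp
    qed
    show "(INF F\<in>?G. F x y) = P m (fst m x) (snd m y)"
      unfolding P_def using e by (intro INF_cong refl) auto
    show "(SUP F\<in>?G. F x y) = Q m (fst m x) (snd m y)"
      unfolding Q_def using e by (intro SUP_cong refl) auto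
  qed
qed

lemma part2: "(\<forall>(\<F>X :: (ereal \<Rightarrow> real) set) (\<F>Y :: (ereal \<Rightarrow> real) set) \<F>XY
      (P :: (ereal \<Rightarrow> real) \<times> (ereal \<Rightarrow> real) \<Rightarrow> real \<Rightarrow> real \<Rightarrow> real) Q.
      \<F>X \<noteq> {} \<and> \<F>Y \<noteq> {} \<and>
      (\<forall>G\<in>\<F>X. univariate_distribution G) \<and> (\<forall>G\<in>\<F>Y. univariate_distribution G) \<and>
      \<F>XY \<subseteq> \<F>X \<times> \<F>Y \<and> \<F>XY \<noteq> {} \<and>
      (\<forall>m\<in>\<F>XY. coherent_imprecise_copula (P m) (Q m)) \<longrightarrow>
      (let \<F> = {(\<lambda>x y. C (fst m x) (snd m y)) | m C. m \<in> \<F>XY \<and> C \<in> copulas_between (P m) (Q m)}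
       in \<F> \<noteq> {} \<and> (\<forall>F\<in>\<F>. bivariate_distribution F)))"
proof (intro allI impI)
  fix \<F>X \<F>Y :: "(ereal \<Rightarrow> real) set" and \<F>XY and P Q :: "(ereal \<Rightarrow> real) \<times> (ereal \<Rightarrow> real) \<Rightarrow> real \<Rightarrow> real \<Rightarrow> real"
  assume a: "\<F>X \<noteq> {} \<and> \<F>Y \<noteq> {} \<and>
      (\<forall>G\<in>\<F>X. univariate_distribution G) \<and> (\<forall>G\<in>\<F>Y. univariate_distribution G) \<and>
      \<F>XY \<subseteq> \<F>X \<times> \<F>Y \<and> \<F>XY \<noteq> {} \<and>
      (\<forall>m\<in>\<F>XY. coherent_imprecise_copula (P m) (Q m))"
  define FF where "FF = {(\<lambda>x y. C (fst m x) (snd m y)) | m C. m \<in> \<F>XY \<and> C \<in> copulas_between (P m) (Q m)}"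
  have ne: "FF \<noteq> {}"
  proof -
    obtain m where m: "m \<in> \<F>XY" using a by blast
    then have "copulas_between (P m) (Q m) \<noteq> {}" using a unfolding coherent_imprecise_copula_def by blast
    then obtain C where "C \<in> copulas_between (P m) (Q m)" by blast
    then show ?thesis unfolding FF_def using m by blast
  qed
  have biv: "bivariate_distribution F" if "F \<in> FF" for F
  proof -
    obtain m C where F: "F = (\<lambda>x y. C (fst m x) (snd m y))" and m: "m \<in> \<F>XY"
      and C: "C \<in> copulas_between (P m) (Q m)" using \<open>F \<in> FF\<close> unfolding FF_def by blast
    have cop: "copula C" using C unfolding copulas_between_def by blast
    note cp = copula_props[OF cop]
    have uX: "univariate_distribution (fst m)" and uY: "univariate_distribution (snd m)"
      using a m by (auto simp: mem_Times_iff)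
    have X: "mono (fst m)" "fst m (-\<infinity>) = 0" "fst m \<infinity> = 1" "\<And>x. fst m x \<in> {0..1}"
      using uX unfolding univariate_distribution_def by auto
    have Y: "mono (snd m)" "snd m (-\<infinity>) = 0" "snd m \<infinity> = 1" "\<And>y. snd m y \<in> {0..1}"
      using uY unfolding univariate_distribution_def by auto
    have inc: "\<forall>u1\<in>{0..1}. \<forall>u2\<in>{0..1}. \<forall>v1\<in>{0..1}. \<forall>v2\<in>{0..1}.
        u1 \<le> u2 \<longrightarrow> v1 \<le> v2 \<longrightarrow> C u1 v1 + C u2 v2 - C u2 v1 - C u1 v2 \<ge> 0"
      using cop unfolding copula_def by blast
    show ?thesis unfolding bivariate_distribution_def F
    proof (intro conjI allI impI)
      fix x y show "0 \<le> C (fst m x) (snd m y)" "C (fst m x) (snd m y) \<le> 1" using cp(1)[OF X(4) Y(4)] by auto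
    next
      fix x show "C (fst m x) (snd m (-\<infinity>)) = 0" using cp(2)[OF X(4)] Y(2) by simp
    next
      fix y show "C (fst m (-\<infinity>)) (snd m y) = 0" using cp(3)[OF Y(4)] X(2) by simp
    next
      show "C (fst m \<infinity>) (snd m \<infinity>) = 1" using cp(2)[of 1] X(3) Y(3) by simp
    next
      fix x1 x2 y1 y2 :: ereal assume "x1 \<le> x2" "y1 \<le> y2"
      then have "fst m x1 \<le> fst m x2" "snd m y1 \<le> snd m y2" using X(1) Y(1) by (auto dest: monoD)
      then show "C (fst m x1) (snd m y1) + C (fst m x2) (snd m y2) - C (fst m x2) (snd m y1) - C (fst m x1) (snd m y2) \<ge> 0"
        using inc X(4) Y(4) by blast
    qed
  qed
  show "let \<F> = {(\<lambda>x y. C (fst m x) (snd m y)) | m C. m \<in> \<F>XY \<and> C \<in> copulas_between (P m) (Q m)}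
       in \<F> \<noteq> {} \<and> (\<forall>F\<in>\<F>. bivariate_distribution F)"
    unfolding Let_def FF_def[symmetric] using ne biv by blast
qed

theorem theorem14:
  shows
  "(\<forall>\<F> :: (ereal \<Rightarrow> ereal \<Rightarrow> real) set.
      \<F> \<noteq> {} \<and> (\<forall>F\<in>\<F>. bivariate_distribution F) \<longrightarrow>
      (\<exists>P Q :: (ereal \<Rightarrow> real) \<times> (ereal \<Rightarrow> real) \<Rightarrow> real \<Rightarrow> real \<Rightarrow> real.
         \<forall>m\<in>margins ` \<F>.
           coherent_imprecise_copula (P m) (Q m) \<and>
           (\<forall>x y. (INF F\<in>{F\<in>\<F>. margins F = m}. F x y) = P m (fst m x) (snd m y) \<and>
                  (SUP F\<in>{F\<in>\<F>. margins F = m}. F x y) = Q m (fst m x) (snd m y))))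
   \<and>
   (\<forall>(\<F>X :: (ereal \<Rightarrow> real) set) (\<F>Y :: (ereal \<Rightarrow> real) set) \<F>XY
      (P :: (ereal \<Rightarrow> real) \<times> (ereal \<Rightarrow> real) \<Rightarrow> real \<Rightarrow> real \<Rightarrow> real) Q.
      \<F>X \<noteq> {} \<and> \<F>Y \<noteq> {} \<and>
      (\<forall>G\<in>\<F>X. univariate_distribution G) \<and> (\<forall>G\<in>\<F>Y. univariate_distribution G) \<and>
      \<F>XY \<subseteq> \<F>X \<times> \<F>Y \<and> \<F>XY \<noteq> {} \<and>
      (\<forall>m\<in>\<F>XY. coherent_imprecise_copula (P m) (Q m)) \<longrightarrow>
      (let \<F> = {(\<lambda>x y. C (fst m x) (snd m y)) | m C. m \<in> \<F>XY \<and> C \<in> copulas_between (P m) (Q m)}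
       in \<F> \<noteq> {} \<and> (\<forall>F\<in>\<F>. bivariate_distribution F)))"
    by (rule conjI[OF part1 part2])

end
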